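(* Let $(X,Y)$ be a random pair with values in $\mathcal X\times\{1,\dots,K\}$, let $f:\mathcal X\to\Delta^K$ be a probabilistic classifier, and let $\ell:\mathcal X\times\{1,\dots,K\}\to\mathbb R$ be a loss with $\ell(X,Y)$ and $R(X,Y)\ell(X,Y)$ integrable. Suppose that either (i) $\mathbb E[(R(X,Y)-1)(\ell(X,Y)-1)]\ge -\mathbb E[\ell(X,Y)]$, or (ii) $f(X)_Y>0$ almost surely and $\ell$ is the cross-entropy loss $\ell(X,Y)=-\log f(X)_Y$. Then $$\mathbb E[R(X,Y)-1]\le \mathbb E[R(X,Y)\cdot \ell(X,Y)].$$
   Context: For $x\in\mathcal X$ and $y\in\{1,\dots,K\}$, the label rank is $R(x,y)=\sum_{l=1}^K \mathbf 1[f(x)_l\ge f(x)_y]$, where $f(x)_l$ is the $l$-th coordinate of $f(x)\in\Delta^K$ (the probability simplex). *)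

theory Defs
  imports "HOL-Probability.Probability"
begin

definition in_simplex :: "nat \<Rightarrow> (nat \<Rightarrow> real) \<Rightarrow> bool" where
  "in_simplex K p \<longleftrightarrow> (\<forall>l\<in>{1..K}. 0 \<le> p l) \<and> (\<Sum>l=1..K. p l) = 1"

definition label_rank :: "nat \<Rightarrow> ('x \<Rightarrow> nat \<Rightarrow> real) \<Rightarrow> 'x \<Rightarrow> nat \<Rightarrow> real" where
  "label_rank K f x y = (\<Sum>l=1..K. if f x l \<ge> f x y then 1 else 0)"

end

theory Submission
  imports Defs
begin

lemma rlnr: "(r::real) \<ge> 1 \<Longrightarrow> r - 1 \<le> r * ln r"
proof -
  assume r: "r \<ge> 1"
  have "ln (1/r) \<le> 1/r - 1" using ln_le_minus_one[of "1/r"] r by simp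
  hence "1 - 1/r \<le> ln r" using r by (simp add: ln_div)
  hence "r * (1 - 1/r) \<le> r * ln r" using r by (intro mult_left_mono) auto
  moreover have "r * (1 - 1/r) = r - 1" using r by (simp add: field_simps)
  ultimately show ?thesis by simp
qed

theorem theorem2:
  fixes M :: "'w measure" and N :: "'x measure"
    and X :: "'w \<Rightarrow> 'x" and Y :: "'w \<Rightarrow> nat" and K :: nat
    and f :: "'x \<Rightarrow> nat \<Rightarrow> real" and loss :: "'x \<Rightarrow> nat \<Rightarrow> real"
  assumes "prob_space M"
    and "X \<in> measurable M N"
    and "Y \<in> measurable M (count_space UNIV)"
    and "\<forall>\<omega>\<in>space M. Y \<omega> \<in> {1..K}"
    and "\<forall>x\<in>space N. in_simplex K (f x)"
    and "\<forall>l\<in>{1..K}. (\<lambda>x. f x l) \<in> borel_measurable N"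
    and "integrable M (\<lambda>\<omega>. loss (X \<omega>) (Y \<omega>))"
    and "integrable M (\<lambda>\<omega>. label_rank K f (X \<omega>) (Y \<omega>) * loss (X \<omega>) (Y \<omega>))"
    and "(\<integral>\<omega>. (label_rank K f (X \<omega>) (Y \<omega>) - 1) * (loss (X \<omega>) (Y \<omega>) - 1) \<partial>M)
            \<ge> - (\<integral>\<omega>. loss (X \<omega>) (Y \<omega>) \<partial>M)
         \<or> ((AE \<omega> in M. f (X \<omega>) (Y \<omega>) > 0) \<and> (\<forall>x y. loss x y = - ln (f x y)))"
  shows "(\<integral>\<omega>. label_rank K f (X \<omega>) (Y \<omega>) - 1 \<partial>M)
           \<le> (\<integral>\<omega>. label_rank K f (X \<omega>) (Y \<omega>) * loss (X \<omega>) (Y \<omega>) \<partial>M)"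
proof -
  interpret prob_space M by fact
  define R where "R = (\<lambda>\<omega>. label_rank K f (X \<omega>) (Y \<omega>))"
  define L where "L = (\<lambda>\<omega>. loss (X \<omega>) (Y \<omega>))"
  define h where "h = (\<lambda>i \<omega>. if i \<in> {1..K} then f (X \<omega>) i else 0)"
  have hm: "h i \<in> borel_measurable M" for i
    unfolding h_def using assms(2,6) by (cases "i \<in> {1..K}") (auto intro: measurable_compose)
  have "(\<lambda>\<omega>. h (Y \<omega>) \<omega>) \<in> borel_measurable M"
    by (rule measurable_compose_countable'[OF hm assms(3)]) auto
  moreover have "\<And>\<omega>. \<omega> \<in> space M \<Longrightarrow> h (Y \<omega>) \<omega> = f (X \<omega>) (Y \<omega>)"
    using assms(4) unfolding h_def by auto
  ultimately have gm: "(\<lambda>\<omega>. f (X \<omega>) (Y \<omega>)) \<in> borel_measurable M"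
    using measurable_cong by (smt (verit))
  have fm: "(\<lambda>\<omega>. f (X \<omega>) l) \<in> borel_measurable M" if "l \<in> {1..K}" for l
    using assms(2,6) that by (auto intro: measurable_compose)
  have Rm: "R \<in> borel_measurable M"
    unfolding R_def label_rank_def
  proof (intro borel_measurable_sum)
    fix l assume l: "l \<in> {1..K}"
    have "{\<omega>\<in>space M. f (X \<omega>) (Y \<omega>) \<le> f (X \<omega>) l} \<in> sets M"
      using gm fm[OF l] by (rule borel_measurable_le)
    hence "(\<lambda>\<omega>. if \<omega> \<in> {\<omega>\<in>space M. f (X \<omega>) (Y \<omega>) \<le> f (X \<omega>) l} then 1 else (0::real)) \<in> borel_measurable M"
      by (intro measurable_If_set) auto
    thus "(\<lambda>\<omega>. if f (X \<omega>) (Y \<omega>) \<le> f (X \<omega>) l then 1 else (0::real)) \<in> borel_measurable M"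
      by (rule measurable_cong[THEN iffD1, rotated]) auto
  qed
  have Rb: "\<bar>R \<omega>\<bar> \<le> real K" for \<omega>
  proof -
    have "R \<omega> \<le> (\<Sum>l=1..K. 1)" unfolding R_def label_rank_def by (intro sum_mono) auto
    moreover have "R \<omega> \<ge> 0" unfolding R_def label_rank_def by (intro sum_nonneg) auto
    ultimately show ?thesis by simp
  qed
  have Ri: "integrable M R"
    by (rule integrable_const_bound[where B="real K"]) (use Rm Rb in auto)
  have R1i: "integrable M (\<lambda>\<omega>. R \<omega> - 1)" using Ri by auto
  from assms(9) show ?thesis
  proof
    assume h0: "(\<integral>\<omega>. (label_rank K f (X \<omega>) (Y \<omega>) - 1) * (loss (X \<omega>) (Y \<omega>) - 1) \<partial>M)
            \<ge> - (\<integral>\<omega>. loss (X \<omega>) (Y \<omega>) \<partial>M)"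
    have h: "(\<integral>\<omega>. (R \<omega> - 1) * (L \<omega> - 1) \<partial>M) \<ge> - (\<integral>\<omega>. L \<omega> \<partial>M)"
      using h0 by (simp add: R_def L_def)
    have Li: "integrable M L" using assms(7) L_def by simp
    have RLi: "integrable M (\<lambda>\<omega>. R \<omega> * L \<omega>)" using assms(8) R_def L_def by simp
    have eq: "(\<lambda>\<omega>. (R \<omega> - 1) * (L \<omega> - 1)) = (\<lambda>\<omega>. (R \<omega> * L \<omega> - L \<omega>) - (R \<omega> - 1))"
      by (auto simp: algebra_simps)
    have "(\<integral>\<omega>. (R \<omega> - 1) * (L \<omega> - 1) \<partial>M) = (\<integral>\<omega>. R \<omega> * L \<omega> \<partial>M) - (\<integral>\<omega>. L \<omega> \<partial>M) - (\<integral>\<omega>. R \<omega> - 1 \<partial>M)"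
      unfolding eq using Li RLi R1i by (simp add: Bochner_Integration.integral_diff)
    with h have "(\<integral>\<omega>. R \<omega> - 1 \<partial>M) \<le> (\<integral>\<omega>. R \<omega> * L \<omega> \<partial>M)" by linarith
    thus ?thesis by (simp add: R_def L_def)
  next
    assume h: "(AE \<omega> in M. f (X \<omega>) (Y \<omega>) > 0) \<and> (\<forall>x y. loss x y = - ln (f x y))"
    have "AE \<omega> in M. R \<omega> - 1 \<le> R \<omega> * L \<omega>"
      using h[THEN conjunct1]
    proof (elim AE_mp, intro AE_I2 impI)
      fix \<omega> assume elim: "\<omega> \<in> space M" "0 < f (X \<omega>) (Y \<omega>)"
      define x where "x = X \<omega>"
      define y where "y = Y \<omega>"
      define p where "p = f x y"
      have xN: "x \<in> space N" using measurable_space[OF assms(2) elim(1)] x_def by simp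
      have y: "y \<in> {1..K}" using elim assms(4) y_def by blast
      have p: "p > 0" using elim p_def x_def y_def by simp
      have simp: "\<forall>l\<in>{1..K}. 0 \<le> f x l" "(\<Sum>l=1..K. f x l) = 1"
        using assms(5) xN unfolding in_simplex_def by auto
      have Rx: "R \<omega> = (\<Sum>l=1..K. if f x l \<ge> p then 1 else 0)"
        unfolding R_def label_rank_def x_def y_def p_def by simp
      have "R \<omega> * p = (\<Sum>l=1..K. if f x l \<ge> p then p else 0)"
        unfolding Rx sum_distrib_right by (intro sum.cong) auto
      also have "\<dots> \<le> (\<Sum>l=1..K. f x l)"
        using simp(1) by (intro sum_mono) auto
      finally have Rp: "R \<omega> * p \<le> 1" using simp(2) by simp
      have "R \<omega> \<ge> (\<Sum>l\<in>{y}. if f x l \<ge> p then 1 else 0)"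
        unfolding Rx using y by (intro sum_mono2) auto
      hence R1: "R \<omega> \<ge> 1" unfolding p_def by simp
      have "p \<le> 1 / R \<omega>" using Rp R1 by (simp add: field_simps)
      hence "ln p \<le> ln (1 / R \<omega>)" using p by (intro ln_mono) auto
      hence "ln (R \<omega>) \<le> - ln p" using R1 by (simp add: ln_div)
      hence "R \<omega> * ln (R \<omega>) \<le> R \<omega> * (- ln p)" using R1 by (intro mult_left_mono) auto
      moreover have "L \<omega> = - ln p" using h unfolding L_def p_def x_def y_def by simp
      ultimately show "R \<omega> - 1 \<le> R \<omega> * L \<omega>" using rlnr[OF R1] by simp
    qed
    hence "(\<integral>\<omega>. R \<omega> - 1 \<partial>M) \<le> (\<integral>\<omega>. R \<omega> * L \<omega> \<partial>M)"
      using R1i assms(8) R_def L_def by (intro integral_mono_AE) auto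
    thus ?thesis by (simp add: R_def L_def)
  qed
qed

end
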